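(* $\mathrm{HS}_{\mathsf{ct}}\not\geq\mathrm{HS}_{\mathsf{st}}$: there is an $\mathrm{HS}$ formula $\psi$ such that no $\mathrm{HS}$ formula $\varphi$ satisfies, for every finite Kripke structure $K$, $K\models_{\mathsf{ct}}\varphi$ iff $K\models_{\mathsf{st}}\psi$.
   Context: A Kripke structure over a finite set $\mathcal{AP}$ is $K=(\mathcal{AP},S,\delta,\mu,s_0)$ with states $S$, left-total $\delta\subseteq S\times S$, labelling $\mu:S\to2^{\mathcal{AP}}$, initial state $s_0$; finite if $S$ is finite. A trace is a non-empty finite prefix of an infinite state sequence following $\delta$; initial if it starts at $s_0$. For a finite word $w=w(0)\cdots w(n)$, $\mathrm{Pref}(w)=\{w[0,i]\mid0\le i\le n-1\}$, $\mathrm{Suff}(w)=\{w[i,n]\mid1\le i\le n\}$. The computation tree $C(K)$ has as states the initial traces of $K$, initial state $s_0$, labelling $\rho\mapsto\mu(\text{last state of }\rho)$, transitions $(\rho,\rho\cdot s)$. $\mathrm{HS}$ formulas: $\psi::=p\mid\neg\psi\mid\psi\wedge\psi\mid\langle X\rangle\psi$ for the Allen relations $A,L,B,E,D,O$ and inverses; all definable (non-strict semantics) from $\langle B\rangle,\langle E\rangle,\langle\bar B\rangle,\langle\bar E\rangle$. State-based semantics over traces: $\rho\models p$ iff $p\in\mu(s)$ for every state $s$ of $\rho$; $\langle B\rangle\psi$: some $\rho'\in\mathrm{Pref}(\rho)$ satisfies $\psi$; $\langle E\rangle\psi$: some $\rho'\in\mathrm{Suff}(\rho)$; $\langle\bar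 B\rangle\psi$: some trace $\rho'$ with $\rho\in\mathrm{Pref}(\rho')$; $\langle\bar E\rangle\psi$: some trace $\rho'$ with $\rho\in\mathrm{Suff}(\rho')$. $K\models_{\mathsf{st}}\psi$ iff every initial trace satisfies $\psi$; $K\models_{\mathsf{ct}}\psi$ iff $C(K)\models_{\mathsf{st}}\psi$. *)

theory Defs
  imports Main
begin

text \<open>Kripke structures over the finite set of propositions UNIV :: 'ap set.\<close>
record ('ap, 's) kripke =
  St   :: "'s set"
  Tr   :: "('s \<times> 's) set"
  Lab  :: "'s \<Rightarrow> 'ap set"
  Init :: 's

definition kripke :: "('ap, 's) kripke \<Rightarrow> bool" where
  "kripke K \<longleftrightarrow> Init K \<in> St K \<and> Tr K \<subseteq> St K \<times> St K
     \<and> (\<forall>s\<in>St K. \<exists>t. (s, t) \<in> Tr K)"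

definition finite_kripke :: "('ap, 's) kripke \<Rightarrow> bool" where
  "finite_kripke K \<longleftrightarrow> kripke K \<and> finite (St K)"

definition trace :: "('ap, 's) kripke \<Rightarrow> 's list \<Rightarrow> bool" where
  "trace K \<rho> \<longleftrightarrow> (\<exists>f :: nat \<Rightarrow> 's. \<exists>n. n \<ge> 1 \<and> f 0 \<in> St K
     \<and> (\<forall>i. (f i, f (Suc i)) \<in> Tr K) \<and> \<rho> = map f [0..<n])"

definition init_trace :: "('ap, 's) kripke \<Rightarrow> 's list \<Rightarrow> bool" where
  "init_trace K \<rho> \<longleftrightarrow> trace K \<rho> \<and> hd \<rho> = Init K"

definition Pref :: "'a list \<Rightarrow> 'a list set" where
  "Pref w = {take (i + 1) w | i. i < length w - 1}"

definition Suff :: "'a list \<Rightarrow> 'a list set" where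
  "Suff w = {drop i w | i. 1 \<le> i \<and> i \<le> length w - 1}"

definition comp_tree :: "('ap, 's) kripke \<Rightarrow> ('ap, 's list) kripke" where
  "comp_tree K = \<lparr> St = {\<rho>. init_trace K \<rho>},
      Tr = {(\<rho>, \<rho> @ [s]) | \<rho> s. init_trace K \<rho> \<and> init_trace K (\<rho> @ [s])},
      Lab = (\<lambda>\<rho>. Lab K (last \<rho>)),
      Init = [Init K] \<rparr>"

text \<open>HS formulas, with the modalities B, E, B-bar, E-bar
  (all other Allen modalities are definable from these).\<close>
datatype 'ap hs =
    Prop 'ap
  | Neg "'ap hs"
  | Conj "'ap hs" "'ap hs"
  | DB "'ap hs"
  | DE "'ap hs"
  | DBbar "'ap hs"
  | DEbar "'ap hs"

fun sat :: "('ap, 's) kripke \<Rightarrow> 's list \<Rightarrow> 'ap hs \<Rightarrow> bool" where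
  "sat K \<rho> (Prop p) \<longleftrightarrow> (\<forall>s\<in>set \<rho>. p \<in> Lab K s)"
| "sat K \<rho> (Neg \<psi>) \<longleftrightarrow> \<not> sat K \<rho> \<psi>"
| "sat K \<rho> (Conj \<psi> \<chi>) \<longleftrightarrow> sat K \<rho> \<psi> \<and> sat K \<rho> \<chi>"
| "sat K \<rho> (DB \<psi>) \<longleftrightarrow> (\<exists>\<rho>'\<in>Pref \<rho>. sat K \<rho>' \<psi>)"
| "sat K \<rho> (DE \<psi>) \<longleftrightarrow> (\<exists>\<rho>'\<in>Suff \<rho>. sat K \<rho>' \<psi>)"
| "sat K \<rho> (DBbar \<psi>) \<longleftrightarrow> (\<exists>\<rho>'. trace K \<rho>' \<and> \<rho> \<in> Pref \<rho>' \<and> sat K \<rho>' \<psi>)"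
| "sat K \<rho> (DEbar \<psi>) \<longleftrightarrow> (\<exists>\<rho>'. trace K \<rho>' \<and> \<rho> \<in> Suff \<rho>' \<and> sat K \<rho>' \<psi>)"

definition models_st :: "('ap, 's) kripke \<Rightarrow> 'ap hs \<Rightarrow> bool" where
  "models_st K \<psi> \<longleftrightarrow> (\<forall>\<rho>. init_trace K \<rho> \<longrightarrow> sat K \<rho> \<psi>)"

definition models_ct :: "('ap, 's) kripke \<Rightarrow> 'ap hs \<Rightarrow> bool" where
  "models_ct K \<psi> \<longleftrightarrow> models_st (comp_tree K) \<psi>"

end

theory Submission
  imports Defs
begin

lemma trace_set:
  assumes "Tr K \<subseteq> St K \<times> St K" "trace K \<rho>" shows "set \<rho> \<subseteq> St K"
proof -
  obtain f n where f: "f 0 \<in> St K" "\<forall>i. (f i, f (Suc i)) \<in> Tr K" "\<rho> = map f [0..<n]"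
    using assms(2) unfolding trace_def by blast
  have "f i \<in> St K" for i
  proof (induction i)
    case 0 then show ?case using f by simp
  next
    case (Suc i) then show ?case using f(2) assms(1) by blast
  qed
  then show ?thesis using f(3) by auto
qed

lemma Pref_set: "\<rho>' \<in> Pref \<rho> \<Longrightarrow> set \<rho>' \<subseteq> set \<rho>"
  unfolding Pref_def by (auto dest: in_set_takeD)

lemma Suff_set: "\<rho>' \<in> Suff \<rho> \<Longrightarrow> set \<rho>' \<subseteq> set \<rho>"
  unfolding Suff_def by (auto dest: in_set_dropD)

lemma sat_cong:
  assumes "Tr K = Tr K'" "St K = St K'" "\<forall>s\<in>St K. Lab K s = Lab K' s"
    "Tr K \<subseteq> St K \<times> St K"
  shows "set \<rho> \<subseteq> St K \<Longrightarrow> sat K \<rho> \<phi> = sat K' \<rho> \<phi>"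
proof (induction \<phi> arbitrary: \<rho>)
  case (Prop p) then show ?case using assms(3) by auto
next
  case (Neg \<phi>) then show ?case by simp
next
  case (Conj \<phi>1 \<phi>2) then show ?case by simp
next
  case (DB \<phi>) then show ?case using Pref_set by (simp, blast)
next
  case (DE \<phi>) then show ?case using Suff_set by (simp, blast)
next
  case (DBbar \<phi>)
  have tr: "trace K = trace K'" using assms(1,2) unfolding trace_def by (auto intro!: ext)
  show ?case using DBbar trace_set[OF assms(4)] by (simp add: tr[symmetric], blast)
next
  case (DEbar \<phi>)
  have tr: "trace K = trace K'" using assms(1,2) unfolding trace_def by (auto intro!: ext)
  show ?case using DEbar trace_set[OF assms(4)] by (simp add: tr[symmetric], blast)
qed

definition K1 :: "('ap, nat) kripke" where
  "K1 = \<lparr> St = {0}, Tr = {(0,0)}, Lab = (\<lambda>s. {}), Init = 0 \<rparr>"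

definition K2 :: "('ap, nat) kripke" where
  "K2 = \<lparr> St = {0,1}, Tr = {(0,0),(1,0),(1,1)}, Lab = (\<lambda>s. if s = 1 then UNIV else {}), Init = 0 \<rparr>"

lemma init_trace_gen:
  assumes "Init K = 0" "0 \<in> St K" "(0,0) \<in> Tr K" "\<forall>x. (0,x) \<in> Tr K \<longrightarrow> x = 0"
  shows "init_trace K \<rho> \<longleftrightarrow> (\<exists>n\<ge>1. \<rho> = replicate n (0::nat))"
proof
  assume "init_trace K \<rho>"
  then obtain f n where f: "n \<ge> 1" "\<forall>i. (f i, f (Suc i)) \<in> Tr K" "\<rho> = map f [0..<n]"
    "hd \<rho> = Init K"
    unfolding init_trace_def trace_def by blast
  have f0: "f 0 = 0" using f assms(1) by (cases n) (auto simp: upt_rec)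
  have "f i = 0" for i
  proof (induction i)
    case 0 then show ?case using f0 .
  next
    case (Suc i) then show ?case using f(2) assms(4) by metis
  qed
  then have "f = (\<lambda>_. 0)" by auto
  then have "\<rho> = replicate n 0" using f(3) by (simp add: map_replicate_const)
  then show "\<exists>n\<ge>1. \<rho> = replicate n (0::nat)" using f(1) by blast
next
  assume "\<exists>n\<ge>1. \<rho> = replicate n (0::nat)"
  then obtain n where n: "n \<ge> 1" "\<rho> = replicate n (0::nat)" by blast
  have "trace K \<rho>" unfolding trace_def
    by (rule exI[of _ "\<lambda>_. 0"], rule exI[of _ n]) (use n assms in \<open>simp add: map_replicate_const\<close>)
  moreover have "hd \<rho> = Init K" using n assms(1) by (cases n) auto
  ultimately show "init_trace K \<rho>" unfolding init_trace_def by blast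
qed

lemma it1: "init_trace (K1 :: ('ap, nat) kripke) \<rho> \<longleftrightarrow> (\<exists>n\<ge>1. \<rho> = replicate n (0::nat))"
  by (rule init_trace_gen) (auto simp: K1_def)

lemma it2: "init_trace (K2 :: ('ap, nat) kripke) \<rho> \<longleftrightarrow> (\<exists>n\<ge>1. \<rho> = replicate n (0::nat))"
  by (rule init_trace_gen) (auto simp: K2_def)

lemma ct_cong: "models_ct (K1 :: ('ap, nat) kripke) \<phi> \<longleftrightarrow> models_ct (K2 :: ('ap, nat) kripke) \<phi>"
proof -
  let ?C1 = "comp_tree (K1 :: ('ap, nat) kripke)" and ?C2 = "comp_tree (K2 :: ('ap, nat) kripke)"
  have it: "init_trace (K1 :: ('ap, nat) kripke) = init_trace (K2 :: ('ap, nat) kripke)"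
    by (intro ext) (simp only: it1 it2)
  have St: "St ?C1 = St ?C2" "Tr ?C1 = Tr ?C2" "Init ?C1 = Init ?C2"
    by (simp_all add: comp_tree_def it) (simp add: K1_def K2_def)
  have Lab: "\<forall>s\<in>St ?C1. Lab ?C1 s = Lab ?C2 s"
  proof
    fix s assume "s \<in> St ?C1"
    then obtain n where "n \<ge> 1" "s = replicate n (0::nat)" by (auto simp: comp_tree_def it1)
    then have "last s = 0" by (cases n) auto
    then show "Lab ?C1 s = Lab ?C2 s" by (simp add: comp_tree_def K1_def K2_def)
  qed
  have TrS: "Tr ?C1 \<subseteq> St ?C1 \<times> St ?C1" by (auto simp: comp_tree_def)
  have itC: "init_trace ?C1 = init_trace ?C2"
    unfolding init_trace_def trace_def using St by simp
  show ?thesis unfolding models_ct_def models_st_def itC[symmetric]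
    using sat_cong[OF St(2) St(1) Lab TrS] trace_set[OF TrS]
    unfolding init_trace_def by blast
qed

definition psi :: "'ap hs" where
  "psi = DEbar (DB (Prop undefined))"

lemma st2: "models_st (K2 :: ('ap, nat) kripke) psi"
  unfolding models_st_def
proof (intro allI impI)
  fix \<rho> assume "init_trace (K2 :: ('ap, nat) kripke) \<rho>"
  then obtain n where n: "n \<ge> 1" "\<rho> = replicate n (0::nat)" using it2 by blast
  let ?r = "1 # \<rho>"
  have "trace (K2 :: ('ap, nat) kripke) ?r" unfolding trace_def
    apply (rule exI[of _ "\<lambda>i. if i = 0 then 1 else 0"], rule exI[of _ "Suc n"])
    using n by (auto simp: K2_def map_replicate_const map_upt_Suc simp del: upt_Suc)
  moreover have "\<rho> \<in> Suff ?r" unfolding Suff_def using n by (auto intro!: exI[of _ 1])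
  moreover have "[1] \<in> Pref ?r" unfolding Pref_def using n by (auto intro!: exI[of _ 0])
  moreover have "sat (K2 :: ('ap, nat) kripke) [1] (Prop undefined)" by (simp add: K2_def)
  ultimately show "sat (K2 :: ('ap, nat) kripke) \<rho> psi" unfolding psi_def
    by (simp only: sat.simps) blast
qed

lemma st1: "\<not> models_st (K1 :: ('ap, nat) kripke) psi"
proof -
  have "init_trace (K1 :: ('ap, nat) kripke) [0]" using it1[of "[0]"] by force
  moreover have "\<not> sat (K1 :: ('ap, nat) kripke) \<rho> (DB (Prop undefined))" for \<rho>
    by (auto simp: Pref_def K1_def)
  moreover have "\<not> sat (K1 :: ('ap, nat) kripke) \<rho> psi" for \<rho>
    using calculation(2) by (simp add: psi_def)
  ultimately show ?thesis unfolding models_st_def by blast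
qed

lemma fk1: "finite_kripke K1" by (simp add: finite_kripke_def kripke_def K1_def)
lemma fk2: "finite_kripke K2" by (auto simp: finite_kripke_def kripke_def K2_def)

theorem proposition5p1:
  "\<exists>\<psi> :: ('ap :: finite) hs. \<not> (\<exists>\<phi> :: 'ap hs.
      \<forall>K :: ('ap, nat) kripke. finite_kripke K \<longrightarrow> (models_ct K \<phi> \<longleftrightarrow> models_st K \<psi>))"
proof (intro exI[of _ psi] notI)
  assume "\<exists>\<phi> :: 'ap hs. \<forall>K :: ('ap, nat) kripke. finite_kripke K \<longrightarrow> (models_ct K \<phi> \<longleftrightarrow> models_st K psi)"
  then obtain \<phi> :: "'ap hs" where h: "\<forall>K :: ('ap, nat) kripke. finite_kripke K \<longrightarrow> (models_ct K \<phi> \<longleftrightarrow> models_st K psi)" by blast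
  show False using h[rule_format, OF fk1] h[rule_format, OF fk2] ct_cong[of \<phi>] st1 st2 by blast
qed

end
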